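(* Let $G=(V,E)$ be a Bitcoin network, let $M\in\Gamma$ be a legitimate monitor, and let $G_M=(V,E_M)$ be the local snapshot of $M$. If $M$ executes the procedure $AToM(V)$ (so that, for each node $N\in V$, an iteration consisting of $PeeV(N)$ followed by $updateTopology(E_M,L_N^M)$ has been carried out), then for all $N,P\in V$, $$(N,P)\in E \iff (N,P)\in E_M.$$
   Context: A Bitcoin network is modeled as a directed graph $G=(V,E)$ whose vertices are the (reachable) nodes; $(N,P)\in E$ means $N$ has an outbound connection to $P$. For a node $X$, $O_X=\{Y:(X,Y)\in E\}$ (outbound peers) and $I_X=\{Y:(Y,X)\in E\}$ (inbound peers). $\Gamma$ is a set of legitimate monitors, each connected to every node (these connections are not in $E$). A marker is a triple $[N,M,r]$ (target, monitor, value). $PeeV(N)$, run by $M$: start with empty $L_N^M$; draw random $r$; send $[N,M,r]$ to $N$; until a timeout, whenever a marker equal to $[N,M,r]$ is received from a node $P$, add $P$ to $L_N^M$; then output $L_N^M$. $HandleMarker(pfrom,[N,M,r])$, run by a node $X$: if $pfrom=M\in\Gamma$, forward the marker to all outbound peers of $X$; if $pfrom=N$ and $N$ is an inbound peer of $X$, send the marker to $M$; otherwise do nothing. $AToM(V)$, run by $M$ with local snapshot $G_M=(V_M,E_M)$: for each node $N\in V$, while $N$ is online, repeat: $L_N^M\leftarrow PeeV(N)$; $updateTopology(E_M,L_N^M)$, which for every $P\in V$ adds $(N,P)$ to $E_M$ if $P\in L_N^M$ and removes $(N,P)$ from $E_M$ otherwise; send $N$ its list of verified peers; adjust the scan period and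 wait. Standing assumptions: all nodes are honest and execute $HandleMarker$; no connection is established or dropped during the execution; every message is delivered before the $PeeV$ timeout expires. *)

theory Defs
  imports Main
begin

text \<open>Nodes and monitors live in a common type 'n (a message sender pfrom may be either).
  A marker is a triple (target N, monitor M, value r).\<close>

type_synonym ('n, 'r) marker = "'n \<times> 'n \<times> 'r"

definition outbound :: "('n \<times> 'n) set \<Rightarrow> 'n \<Rightarrow> 'n set" where
  "outbound E X = {Y. (X, Y) \<in> E}"

definition inbound :: "('n \<times> 'n) set \<Rightarrow> 'n \<Rightarrow> 'n set" where
  "inbound E X = {Y. (Y, X) \<in> E}"

text \<open>HandleMarker(pfrom, [N,M,r]) run by node X: the set of recipients to which X
  sends the marker.\<close>
definition handle_marker ::
  "('n \<times> 'n) set \<Rightarrow> 'n set \<Rightarrow> 'n \<Rightarrow> 'n \<Rightarrow> ('n, 'r) marker \<Rightarrow> 'n set" where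
  "handle_marker E \<Gamma> X pfrom mk =
     (case mk of (N, M, r) \<Rightarrow>
        if pfrom = M \<and> M \<in> \<Gamma> then outbound E X
        else if pfrom = N \<and> N \<in> inbound E X then {M}
        else {})"

text \<open>Message deliveries caused by the monitor M sending marker [N,M,r] to N:
  delivered E \<Gamma> V mk s t  means that the marker mk is sent from s to t (and, by the
  standing assumption, delivered before the timeout). Every (honest) node X \<in> V runs
  HandleMarker on each marker it receives.\<close>
inductive delivered ::
  "('n \<times> 'n) set \<Rightarrow> 'n set \<Rightarrow> 'n set \<Rightarrow> ('n, 'r) marker \<Rightarrow> 'n \<Rightarrow> 'n \<Rightarrow> bool"
  for E \<Gamma> V mk where
  init: "mk = (N, M, r) \<Longrightarrow> delivered E \<Gamma> V mk M N"
| step: "delivered E \<Gamma> V mk s X \<Longrightarrow> X \<in> V \<Longrightarrow> Y \<in> handle_marker E \<Gamma> X s mk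
         \<Longrightarrow> delivered E \<Gamma> V mk X Y"

text \<open>PeeV(N) run by M with random value r: the list L_N^M of nodes from which M
  received the marker [N,M,r].\<close>
definition peev :: "('n \<times> 'n) set \<Rightarrow> 'n set \<Rightarrow> 'n set \<Rightarrow> 'n \<Rightarrow> 'n \<Rightarrow> 'r \<Rightarrow> 'n set" where
  "peev E \<Gamma> V N M r = {P. delivered E \<Gamma> V (N, M, r) P M}"

definition update_topology :: "'n set \<Rightarrow> 'n \<Rightarrow> 'n set \<Rightarrow> ('n \<times> 'n) set \<Rightarrow> ('n \<times> 'n) set" where
  "update_topology V N L EM =
     (EM - {(N, P) | P. P \<in> V}) \<union> {(N, P) | P. P \<in> V \<and> P \<in> L}"

definition atom_step ::
  "('n \<times> 'n) set \<Rightarrow> 'n set \<Rightarrow> 'n set \<Rightarrow> 'n \<Rightarrow> 'n \<times> 'r \<Rightarrow> ('n \<times> 'n) set \<Rightarrow> ('n \<times> 'n) set" where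
  "atom_step E \<Gamma> V M nr EM =
     (case nr of (N, r) \<Rightarrow> update_topology V N (peev E \<Gamma> V N M r) EM)"

text \<open>An execution of AToM(V) by M: a finite sequence of iterations (target, random value),
  applied in order to the initial snapshot EM0.\<close>
definition atom :: "('n \<times> 'n) set \<Rightarrow> 'n set \<Rightarrow> 'n set \<Rightarrow> 'n \<Rightarrow> ('n \<times> 'r) list
                    \<Rightarrow> ('n \<times> 'n) set \<Rightarrow> ('n \<times> 'n) set" where
  "atom E \<Gamma> V M runs EM0 = fold (atom_step E \<Gamma> V M) runs EM0"

end

theory Submission
  imports Defs
begin

lemma deliv_inv:
  assumes "delivered E \<Gamma> V mk s t" "mk = (N, M, r)" "E \<subseteq> V \<times> V"
    "N \<in> V" "M \<in> \<Gamma>" "V \<inter> \<Gamma> = {}"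
  shows "(s = M \<and> t = N) \<or> (s = N \<and> (N, t) \<in> E) \<or> (t = M \<and> (N, s) \<in> E)"
  using assms(1)
proof (induction rule: delivered.induct)
  case (init N' M' r')
  then show ?case using assms by auto
next
  case (step s X Y)
  have NM: "N \<noteq> M" using assms by auto
  from step.IH show ?case
  proof (elim disjE conjE)
    assume "s = M" "X = N"
    then show ?thesis using step.hyps(3) assms NM
      by (auto simp: handle_marker_def outbound_def)
  next
    assume "s = N" "(N, X) \<in> E"
    then show ?thesis using step.hyps(3) assms NM
      by (auto simp: handle_marker_def inbound_def outbound_def)
  next
    assume "X = M" "(N, s) \<in> E"
    then show ?thesis using step.hyps(2) assms by auto
  qed
qed

lemma peev_char:
  assumes "E \<subseteq> V \<times> V" "N \<in> V" "M \<in> \<Gamma>" "V \<inter> \<Gamma> = {}" "P \<in> V"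
  shows "P \<in> peev E \<Gamma> V N M r \<longleftrightarrow> (N, P) \<in> E"
proof
  assume "P \<in> peev E \<Gamma> V N M r"
  then have "delivered E \<Gamma> V (N, M, r) P M" by (simp add: peev_def)
  from deliv_inv[OF this refl assms(1-4)] show "(N, P) \<in> E"
    using assms by auto
next
  assume e: "(N, P) \<in> E"
  have NM: "N \<noteq> M" using assms by auto
  have d1: "delivered E \<Gamma> V (N, M, r) M N" by (rule delivered.init) simp
  have d2: "delivered E \<Gamma> V (N, M, r) N P"
    by (rule delivered.step[OF d1 assms(2)])
       (use e assms in \<open>auto simp: handle_marker_def outbound_def\<close>)
  have d3: "delivered E \<Gamma> V (N, M, r) P M"
    by (rule delivered.step[OF d2 assms(5)])
       (use e assms NM in \<open>auto simp: handle_marker_def inbound_def\<close>)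
  then show "P \<in> peev E \<Gamma> V N M r" by (simp add: peev_def)
qed

lemma fold_char:
  assumes "E \<subseteq> V \<times> V" "N \<in> V" "M \<in> \<Gamma>" "V \<inter> \<Gamma> = {}" "P \<in> V"
  shows "(N, P) \<in> fold (atom_step E \<Gamma> V M) runs EM \<longleftrightarrow>
    (if N \<in> fst ` set runs then (N, P) \<in> E else (N, P) \<in> EM)"
proof (induction runs arbitrary: EM)
  case Nil
  then show ?case by simp
next
  case (Cons x xs)
  obtain N' r where x: "x = (N', r)" by (cases x)
  have step: "(N, P) \<in> atom_step E \<Gamma> V M x EM \<longleftrightarrow>
      (if N = N' then (N, P) \<in> E else (N, P) \<in> EM)"
    using peev_char[OF assms(1-4) assms(5), of r] assms(5)
    by (auto simp: x atom_step_def update_topology_def)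
  show ?case using Cons.IH[of "atom_step E \<Gamma> V M x EM"] step x by auto
qed

theorem theorem2:
  fixes E EM0 :: "('n \<times> 'n) set" and V \<Gamma> :: "'n set" and M :: 'n
    and runs :: "('n \<times> 'r) list"
  assumes "E \<subseteq> V \<times> V"
    and "V \<inter> \<Gamma> = {}"
    and "M \<in> \<Gamma>"
    and "EM0 \<subseteq> V \<times> V"
    and "set (map fst runs) = V"
    and "N \<in> V" and "P \<in> V"
  shows "(N, P) \<in> E \<longleftrightarrow> (N, P) \<in> atom E \<Gamma> V M runs EM0"
proof -
  have "N \<in> fst ` set runs" using assms(5,6) by simp
  then show ?thesis
    using fold_char[OF assms(1,6,3,2,7), of runs EM0] by (simp add: atom_def)
qed

end
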